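(* Let $K$ be a field, $V$ a finite-dimensional $K$-vector space, $W$ a subspace and $U$ a complement of $W$, so $V=W\oplus U$. Let $\operatorname{CWAff}_W(V)$ be the group of all $W$-coset-wise $K$-affine functions $V\to V$ that are permutations of $V$. Let $\operatorname{Aff}(W)\wr_{\mathrm{imp}}\operatorname{Sym}(U)$ be the permutation group on $W\times U$ consisting of all maps $(w,u)\mapsto(a_u(w),\sigma(u))$ with $\sigma\in\operatorname{Sym}(U)$ and $a_u\in\operatorname{Aff}(W)$ for each $u\in U$. Let $\iota:V\to W\times U$, $w+u\mapsto(w,u)$ ($w\in W,u\in U$). Then $\sigma\mapsto\iota\circ\sigma\circ\iota^{-1}$ maps $\operatorname{CWAff}_W(V)$ bijectively onto $\operatorname{Aff}(W)\wr_{\mathrm{imp}}\operatorname{Sym}(U)$ (i.e., $\iota$ is an isomorphism of permutation groups). Moreover, for every family $(\alpha_u)_{u\in U}$ of automorphisms of $W$ and every family $(v_u)_{u\in U}$ of vectors of $V$, written $v_u=\omega_u+\nu_u$ with $\omega_u\in W$, $\nu_u\in U$, such that the map $f:V\to V$, $w+u\mapsto \alpha_u(w)+u+v_u$ ($w\in W,u\in U$) is a permutation, the map $g:U\to U$, $u\mapsto u+\nu_u$, is a permutation of $U$ and $\iota\circ f\circ\iota^{-1}$ is the permutation $(w,u)\mapsto(\alpha_u(w)+\omega_u,\ g(u))$ of $W\times U$.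
   Context: A function $f:V\to V$ is $W$-coset-wise $K$-affine if for each coset $C$ of $W$ in $V$ there are $v_C\in V$ and a $K$-endomorphism $\varphi_C$ of $V$ with $\varphi_C(W)\subseteq W$ such that $f(x)=\varphi_C(x)+v_C$ for all $x\in C$. $\operatorname{Aff}(W)$ denotes the group of affine permutations of $W$, i.e., maps $w\mapsto\alpha(w)+\omega$ with $\alpha$ a $K$-automorphism of $W$ and $\omega\in W$. *)

theory Defs
  imports Complex_Main "HOL-Library.FuncSet"
begin

(* The ambient finite-dimensional K-vector space V is the whole type 'v,
   with scalar multiplication scale :: 'k \<Rightarrow> 'v \<Rightarrow> 'v. *)

definition coset_wise_affine ::
  "('k::field \<Rightarrow> 'v::ab_group_add \<Rightarrow> 'v) \<Rightarrow> 'v set \<Rightarrow> ('v \<Rightarrow> 'v) \<Rightarrow> bool" where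
  "coset_wise_affine scale W f \<longleftrightarrow>
     (\<forall>C \<in> {(\<lambda>w. v + w) ` W | v. True}.
        \<exists>\<phi> vC. Vector_Spaces.linear scale scale \<phi> \<and> \<phi> ` W \<subseteq> W \<and>
              (\<forall>x\<in>C. f x = \<phi> x + vC))"

definition CWAff ::
  "('k::field \<Rightarrow> 'v::ab_group_add \<Rightarrow> 'v) \<Rightarrow> 'v set \<Rightarrow> ('v \<Rightarrow> 'v) set" where
  "CWAff scale W = {f. coset_wise_affine scale W f \<and> bij f}"

definition sub_aut ::
  "('k::field \<Rightarrow> 'v::ab_group_add \<Rightarrow> 'v) \<Rightarrow> 'v set \<Rightarrow> ('v \<Rightarrow> 'v) \<Rightarrow> bool" where
  "sub_aut scale W \<alpha> \<longleftrightarrow>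
     (\<forall>x\<in>W. \<forall>y\<in>W. \<alpha> (x + y) = \<alpha> x + \<alpha> y) \<and>
     (\<forall>c. \<forall>x\<in>W. \<alpha> (scale c x) = scale c (\<alpha> x)) \<and>
     bij_betw \<alpha> W W"

definition in_Aff ::
  "('k::field \<Rightarrow> 'v::ab_group_add \<Rightarrow> 'v) \<Rightarrow> 'v set \<Rightarrow> ('v \<Rightarrow> 'v) \<Rightarrow> bool" where
  "in_Aff scale W a \<longleftrightarrow>
     (\<exists>\<alpha> \<omega>. sub_aut scale W \<alpha> \<and> \<omega> \<in> W \<and> (\<forall>w\<in>W. a w = \<alpha> w + \<omega>))"

definition AffWrSym ::
  "('k::field \<Rightarrow> 'v::ab_group_add \<Rightarrow> 'v) \<Rightarrow> 'v set \<Rightarrow> 'v set \<Rightarrow> ('v \<times> 'v \<Rightarrow> 'v \<times> 'v) set" where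
  "AffWrSym scale W U =
     {F. \<exists>\<sigma> a. bij_betw \<sigma> U U \<and> (\<forall>u\<in>U. in_Aff scale W (a u)) \<and>
           F = (\<lambda>p\<in>W \<times> U. (a (snd p) (fst p), \<sigma> (snd p)))}"

definition iota :: "'v::ab_group_add set \<Rightarrow> 'v set \<Rightarrow> 'v \<Rightarrow> 'v \<times> 'v" where
  "iota W U v = (THE p. fst p \<in> W \<and> snd p \<in> U \<and> v = fst p + snd p)"

definition conj_iota :: "'v::ab_group_add set \<Rightarrow> 'v set \<Rightarrow> ('v \<Rightarrow> 'v) \<Rightarrow> ('v \<times> 'v \<Rightarrow> 'v \<times> 'v)" where
  "conj_iota W U f = (\<lambda>p\<in>W \<times> U. iota W U (f (fst p + snd p)))"

end

theory Submission
  imports Defs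
begin

lemma fd_inj_bij:
  fixes scale :: "'k::field \<Rightarrow> 'v::ab_group_add \<Rightarrow> 'v"
  assumes fd: "finite_dimensional_vector_space scale B"
    and lin: "Vector_Spaces.linear scale scale \<phi>"
    and W: "module.subspace scale W"
    and img: "\<phi> ` W \<subseteq> W" and inj: "inj_on \<phi> W"
  shows "bij_betw \<phi> W W"
proof -
  interpret f: finite_dimensional_vector_space scale B by fact
  interpret p: finite_dimensional_vector_space_pair_1 scale B scale by unfold_locales
  have sp: "f.span W = W" using W by simp
  have d: "f.dim (\<phi> ` W) = f.dim W"
    using p.dim_image_eq[OF lin, of W] inj sp by simp
  have s: "f.subspace (\<phi> ` W)" using p.linear_subspace_image[OF lin W] .
  have "\<phi> ` W = W" using f.subspace_dim_equal[OF s W img] d by simp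
  thus ?thesis using inj by (simp add: bij_betw_def)
qed

locale wu = vector_space scale for scale :: "'k::field \<Rightarrow> 'v::ab_group_add \<Rightarrow> 'v" +
  fixes W U :: "'v set"
  assumes Wsub: "subspace W" and Usub: "subspace U" and cap: "W \<inter> U = {0}"
    and sumWU: "\<forall>v. \<exists>w\<in>W. \<exists>u\<in>U. v = w + u"
begin

lemma dec_unique:
  assumes "w \<in> W" "u \<in> U" "w' \<in> W" "u' \<in> U" "w + u = w' + u'"
  shows "w = w' \<and> u = u'"
proof -
  have e: "w - w' = u' - u" using assms(5)
    by (simp add: algebra_simps)
  have "w - w' \<in> W" using subspace_diff[OF Wsub assms(1,3)] .
  moreover have "w - w' \<in> U" using subspace_diff[OF Usub assms(4,2)] e by simp
  ultimately have "w - w' = 0" using cap by blast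
  thus ?thesis using e by simp
qed

lemma iota_eq: assumes "w \<in> W" "u \<in> U" shows "iota W U (w + u) = (w, u)"
  unfolding iota_def
proof (rule the_equality)
  show "fst (w, u) \<in> W \<and> snd (w, u) \<in> U \<and> w + u = fst (w, u) + snd (w, u)" using assms by simp
  fix p assume "fst p \<in> W \<and> snd p \<in> U \<and> w + u = fst p + snd p"
  then have "w = fst p \<and> u = snd p" using dec_unique assms by blast
  thus "p = (w, u)" by (cases p) simp
qed

lemma iota_props: "fst (iota W U v) \<in> W \<and> snd (iota W U v) \<in> U \<and> v = fst (iota W U v) + snd (iota W U v)"
proof -
  obtain w u where "w \<in> W" "u \<in> U" "v = w + u" using sumWU by blast
  thus ?thesis using iota_eq by simp
qed

lemma iota_obtain:
  obtains a b where "iota W U x = (a, b)" "a \<in> W" "b \<in> U" "x = a + b"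
  using iota_props[of x] by (cases "iota W U x") auto

lemma pW_add: "fst (iota W U (x + y)) = fst (iota W U x) + fst (iota W U y)"
proof -
  obtain a b where ab: "iota W U x = (a, b)" "a \<in> W" "b \<in> U" "x = a + b" by (rule iota_obtain)
  obtain c d where cd: "iota W U y = (c, d)" "c \<in> W" "d \<in> U" "y = c + d" by (rule iota_obtain)
  have "x + y = (a + c) + (b + d)" using ab(4) cd(4) by (simp add: algebra_simps)
  moreover have "iota W U ((a + c) + (b + d)) = (a + c, b + d)"
    by (rule iota_eq) (use subspace_add[OF Wsub] subspace_add[OF Usub] ab cd in auto)
  ultimately show ?thesis using ab(1) cd(1) by simp
qed

lemma pW_scale: "fst (iota W U (scale c x)) = scale c (fst (iota W U x))"
proof -
  obtain a b where ab: "iota W U x = (a, b)" "a \<in> W" "b \<in> U" "x = a + b" by (rule iota_obtain)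
  have "scale c x = scale c a + scale c b" using ab(4) by (simp add: scale_right_distrib)
  moreover have "iota W U (scale c a + scale c b) = (scale c a, scale c b)"
    by (rule iota_eq) (use subspace_scale[OF Wsub] subspace_scale[OF Usub] ab in auto)
  ultimately show ?thesis using ab(1) by simp
qed

lemma transl_bij:
  assumes "bij_betw \<alpha> W W" "\<omega> \<in> W"
  shows "bij_betw (\<lambda>w. \<alpha> w + \<omega>) W W"
proof -
  have "bij_betw (\<lambda>x. x + \<omega>) W W"
  proof (rule bij_betwI[where g = "\<lambda>x. x - \<omega>"])
    show "(\<lambda>x. x + \<omega>) \<in> W \<rightarrow> W" using subspace_add[OF Wsub] assms(2) by auto
    show "(\<lambda>x. x - \<omega>) \<in> W \<rightarrow> W" using subspace_diff[OF Wsub] assms(2) by auto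
  qed auto
  from bij_betw_trans[OF assms(1) this] show ?thesis by (simp add: comp_def)
qed

lemma s_bij:
  assumes a: "\<forall>u\<in>U. bij_betw (a u) W W" and s: "\<forall>u\<in>U. s u \<in> U"
    and f: "\<forall>w\<in>W. \<forall>u\<in>U. f (w + u) = a u w + s u" and bf: "bij f"
  shows "bij_betw s U U"
proof -
  have "inj_on s U"
  proof (rule inj_onI)
    fix u u' assume u: "u \<in> U" "u' \<in> U" "s u = s u'"
    have 0: "0 \<in> W" using subspace_0[OF Wsub] .
    have au: "bij_betw (a u) W W" "bij_betw (a u') W W" using a u(1,2) by auto
    have "a u 0 \<in> W" using bij_betw_apply[OF au(1) 0] .
    moreover have "a u' ` W = W" using bij_betw_imp_surj_on[OF au(2)] .
    ultimately obtain w' where w': "w' \<in> W" "a u' w' = a u 0" by (metis imageE)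
    have "f (0 + u) = a u 0 + s u" using f u(1) 0 by blast
    moreover have "f (w' + u') = a u' w' + s u'" using f u(2) w'(1) by blast
    ultimately have "f (0 + u) = f (w' + u')" using w'(2) u(3) by simp
    hence "0 + u = w' + u'" using bij_is_inj[OF bf] by (simp add: inj_eq)
    thus "u = u'" using dec_unique[OF 0 u(1) w'(1) u(2)] by blast
  qed
  moreover have "s ` U = U"
  proof
    show "s ` U \<subseteq> U" using s by auto
    show "U \<subseteq> s ` U"
    proof
      fix u'' assume u'': "u'' \<in> U"
      obtain x where x: "f x = u''" using bij_is_surj[OF bf] by (metis surjD)
      obtain w u where wu: "w \<in> W" "u \<in> U" "x = w + u" using sumWU by blast
      have "f (w + u) = a u w + s u" using f wu(1,2) by blast
      hence "a u w + s u = 0 + u''" using wu(3) x by simp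
      moreover have "a u w \<in> W" using bij_betw_apply[of "a u" W W w] a wu(1,2) by blast
      moreover have "s u \<in> U" using s wu(2) by blast
      ultimately have "s u = u''" using dec_unique[OF _ _ subspace_0[OF Wsub] u''] by blast
      thus "u'' \<in> s ` U" using wu by blast
    qed
  qed
  ultimately show ?thesis by (simp add: bij_betw_def)
qed

lemma conj_formula:
  assumes a: "\<forall>u\<in>U. \<forall>w\<in>W. a u w \<in> W" and s: "\<forall>u\<in>U. s u \<in> U"
    and f: "\<forall>w\<in>W. \<forall>u\<in>U. f (w + u) = a u w + s u"
  shows "conj_iota W U f = (\<lambda>p\<in>W \<times> U. (a (snd p) (fst p), s (snd p)))"
  unfolding conj_iota_def
proof (rule restrict_ext)
  fix p assume "p \<in> W \<times> U"
  then show "iota W U (f (fst p + snd p)) = (a (snd p) (fst p), s (snd p))"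
    using a s f iota_eq by (cases p) auto
qed

lemma conj_inj: "inj_on (conj_iota W U) X"
proof (rule inj_onI)
  fix f g assume e: "conj_iota W U f = conj_iota W U g"
  show "f = g"
  proof
    fix x
    obtain w u where wu: "w \<in> W" "u \<in> U" "x = w + u" using sumWU by blast
    have "conj_iota W U f (w, u) = conj_iota W U g (w, u)" using e by simp
    hence "iota W U (f x) = iota W U (g x)" using wu by (simp add: conj_iota_def)
    thus "f x = g x" using iota_props[of "f x"] iota_props[of "g x"] by metis
  qed
qed

end

context wu begin
lemma part2:
  assumes H1: "\<forall>u\<in>U. sub_aut scale W (\<alpha> u)"
      and H2: "\<forall>u\<in>U. \<omega> u \<in> W \<and> \<nu> u \<in> U \<and> v u = \<omega> u + \<nu> u"
      and H3: "\<forall>w\<in>W. \<forall>u\<in>U. f (w + u) = \<alpha> u w + u + v u"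
      and H4: "bij f"
  shows "bij_betw (\<lambda>u. u + \<nu> u) U U \<and>
         conj_iota W U f = (\<lambda>p\<in>W \<times> U. (\<alpha> (snd p) (fst p) + \<omega> (snd p), snd p + \<nu> (snd p)))"
proof -
    have fa: "\<forall>w\<in>W. \<forall>u\<in>U. f (w + u) = (\<alpha> u w + \<omega> u) + (u + \<nu> u)"
    proof (intro ballI)
      fix w u assume "w \<in> W" "u \<in> U"
      then have "f (w + u) = \<alpha> u w + u + (\<omega> u + \<nu> u)" using H2 H3 by simp
      thus "f (w + u) = (\<alpha> u w + \<omega> u) + (u + \<nu> u)" by (simp add: algebra_simps)
    qed
    have ab: "\<forall>u\<in>U. bij_betw (\<lambda>w. \<alpha> u w + \<omega> u) W W"
    proof
      fix u assume u: "u \<in> U"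
      have "bij_betw (\<alpha> u) W W" using H1 u unfolding sub_aut_def by blast
      moreover have "\<omega> u \<in> W" using H2 u by blast
      ultimately show "bij_betw (\<lambda>w. \<alpha> u w + \<omega> u) W W" by (rule transl_bij)
    qed
    have sU: "\<forall>u\<in>U. u + \<nu> u \<in> U" using H2 subspace_add[OF Usub] by blast
    have aW: "\<forall>u\<in>U. \<forall>w\<in>W. \<alpha> u w + \<omega> u \<in> W"
    proof (intro ballI)
      fix u w assume u: "u \<in> U" and w: "w \<in> W"
      show "\<alpha> u w + \<omega> u \<in> W" using bij_betw_apply[OF ab[rule_format, OF u] w] by simp
    qed
    show ?thesis
      using s_bij[OF ab sU fa H4] conj_formula[OF aW sU fa] by simp
qed

lemma img1:
  assumes fd: "finite_dimensional_vector_space scale B" and fC: "f \<in> CWAff scale W"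
  shows "conj_iota W U f \<in> AffWrSym scale W U"
  proof -
    have cwa: "coset_wise_affine scale W f" and bf: "bij f" using fC by (auto simp: CWAff_def)
    have "\<forall>u\<in>U. \<exists>\<phi> c. Vector_Spaces.linear scale scale \<phi> \<and> \<phi> ` W \<subseteq> W \<and>
              (\<forall>x\<in>(\<lambda>w. u + w) ` W. f x = \<phi> x + c)"
    proof
      fix u assume "u \<in> U"
      have "(\<lambda>w. u + w) ` W \<in> {(\<lambda>w. v + w) ` W | v. True}" by blast
      thus "\<exists>\<phi> c. Vector_Spaces.linear scale scale \<phi> \<and> \<phi> ` W \<subseteq> W \<and>
              (\<forall>x\<in>(\<lambda>w. u + w) ` W. f x = \<phi> x + c)"
        using cwa unfolding coset_wise_affine_def by blast
    qed
    then obtain \<phi> where "\<forall>u\<in>U. \<exists>c. Vector_Spaces.linear scale scale (\<phi> u) \<and> \<phi> u ` W \<subseteq> W \<and>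
              (\<forall>x\<in>(\<lambda>w. u + w) ` W. f x = \<phi> u x + c)" by (rule bchoice[elim_format]) blast
    then obtain c where phc: "\<forall>u\<in>U. Vector_Spaces.linear scale scale (\<phi> u) \<and> \<phi> u ` W \<subseteq> W \<and>
              (\<forall>x\<in>(\<lambda>w. u + w) ` W. f x = \<phi> u x + c u)" by (rule bchoice[elim_format]) blast
    define \<omega> where "\<omega> u = fst (iota W U (\<phi> u u + c u))" for u
    define \<nu> where "\<nu> u = snd (iota W U (\<phi> u u + c u))" for u
    have \<omega>W: "\<omega> u \<in> W" and \<nu>U: "\<nu> u \<in> U" and \<omega>\<nu>: "\<phi> u u + c u = \<omega> u + \<nu> u" for u
      using iota_props[of "\<phi> u u + c u"] unfolding \<omega>_def \<nu>_def by auto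
    have lin: "Vector_Spaces.linear scale scale (\<phi> u)" and phW: "\<phi> u ` W \<subseteq> W"
      and fe: "\<forall>x\<in>(\<lambda>w. u + w) ` W. f x = \<phi> u x + c u" if "u \<in> U" for u
      using phc that by auto
    have fw: "f (w + u) = \<phi> u w + \<phi> u u + c u" if "w \<in> W" "u \<in> U" for w u
    proof -
      have "w + u \<in> (\<lambda>w. u + w) ` W" using that by (auto simp: add.commute)
      hence "f (w + u) = \<phi> u (w + u) + c u" using fe[OF that(2)] by blast
      also have "\<phi> u (w + u) = \<phi> u w + \<phi> u u" using lin[OF that(2)] by (simp add: Vector_Spaces.linear_iff)
      finally show ?thesis .
    qed
    have fa: "\<forall>w\<in>W. \<forall>u\<in>U. f (w + u) = (\<phi> u w + \<omega> u) + \<nu> u"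
    proof (intro ballI)
      fix w u assume wu: "w \<in> W" "u \<in> U"
      have "f (w + u) = \<phi> u w + (\<phi> u u + c u)" using fw[OF wu] by (simp add: add.assoc)
      thus "f (w + u) = (\<phi> u w + \<omega> u) + \<nu> u" using \<omega>\<nu>[of u] by (simp add: add.assoc)
    qed
    have phb: "bij_betw (\<phi> u) W W" if u: "u \<in> U" for u
    proof (rule fd_inj_bij[OF fd lin[OF u] Wsub phW[OF u]])
      show "inj_on (\<phi> u) W"
      proof (rule inj_onI)
        fix x y assume xy: "x \<in> W" "y \<in> W" "\<phi> u x = \<phi> u y"
        have "f (x + u) = f (y + u)" using fw[OF xy(1) u] fw[OF xy(2) u] xy(3) by simp
        hence "x + u = y + u" using bij_is_inj[OF bf] by (simp add: inj_eq)
        thus "x = y" by simp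
      qed
    qed
    have ab: "\<forall>u\<in>U. bij_betw (\<lambda>w. \<phi> u w + \<omega> u) W W"
    proof
      fix u assume u: "u \<in> U"
      show "bij_betw (\<lambda>w. \<phi> u w + \<omega> u) W W" by (rule transl_bij[OF phb[OF u] \<omega>W])
    qed
    have sU: "\<forall>u\<in>U. \<nu> u \<in> U" using \<nu>U by blast
    have aW: "\<forall>u\<in>U. \<forall>w\<in>W. \<phi> u w + \<omega> u \<in> W"
    proof (intro ballI)
      fix u w assume u: "u \<in> U" and w: "w \<in> W"
      show "\<phi> u w + \<omega> u \<in> W" using bij_betw_apply[OF ab[rule_format, OF u] w] by simp
    qed
    have nb: "bij_betw \<nu> U U" by (rule s_bij[OF ab sU fa bf])
    have ce: "conj_iota W U f = (\<lambda>p\<in>W \<times> U. ((\<lambda>u w. \<phi> u w + \<omega> u) (snd p) (fst p), \<nu> (snd p)))"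
      using conj_formula[OF aW sU fa] by simp
    have inA: "\<forall>u\<in>U. in_Aff scale W (\<lambda>w. \<phi> u w + \<omega> u)"
    proof
      fix u assume u: "u \<in> U"
      have "sub_aut scale W (\<phi> u)"
        using lin[OF u] phb[OF u] by (simp add: sub_aut_def Vector_Spaces.linear_iff)
      thus "in_Aff scale W (\<lambda>w. \<phi> u w + \<omega> u)" unfolding in_Aff_def using \<omega>W by blast
    qed
    show ?thesis unfolding AffWrSym_def mem_Collect_eq
      by (rule exI[of _ \<nu>], rule exI[of _ "\<lambda>u w. \<phi> u w + \<omega> u"]) (simp add: nb inA ce)
  qed

lemma img2:
  assumes vs: "vector_space scale" and FA: "F \<in> AffWrSym scale W U"
  shows "F \<in> conj_iota W U ` CWAff scale W"
  proof -
    obtain \<sigma> a where \<sigma>: "bij_betw \<sigma> U U" and aA: "\<forall>u\<in>U. in_Aff scale W (a u)"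
      and Fe: "F = (\<lambda>p\<in>W \<times> U. (a (snd p) (fst p), \<sigma> (snd p)))"
      using FA unfolding AffWrSym_def by blast
    have "\<forall>u\<in>U. \<exists>\<alpha> \<omega>. sub_aut scale W \<alpha> \<and> \<omega> \<in> W \<and> (\<forall>w\<in>W. a u w = \<alpha> w + \<omega>)"
      using aA unfolding in_Aff_def by blast
    then obtain \<alpha> where "\<forall>u\<in>U. \<exists>\<omega>. sub_aut scale W (\<alpha> u) \<and> \<omega> \<in> W \<and> (\<forall>w\<in>W. a u w = \<alpha> u w + \<omega>)"
      by (rule bchoice[elim_format]) blast
    then obtain \<omega> where aw: "\<forall>u\<in>U. sub_aut scale W (\<alpha> u) \<and> \<omega> u \<in> W \<and> (\<forall>w\<in>W. a u w = \<alpha> u w + \<omega> u)"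
      by (rule bchoice[elim_format]) blast
    have add\<alpha>: "\<And>x y. x \<in> W \<Longrightarrow> y \<in> W \<Longrightarrow> \<alpha> u (x + y) = \<alpha> u x + \<alpha> u y"
      and sc\<alpha>: "\<And>c x. x \<in> W \<Longrightarrow> \<alpha> u (scale c x) = scale c (\<alpha> u x)"
      and b\<alpha>: "bij_betw (\<alpha> u) W W" and \<omega>W: "\<omega> u \<in> W"
      and ae: "\<And>w. w \<in> W \<Longrightarrow> a u w = \<alpha> u w + \<omega> u" if "u \<in> U" for u
      using aw that unfolding sub_aut_def by auto
    have aW: "\<forall>u\<in>U. \<forall>w\<in>W. a u w \<in> W"
    proof (intro ballI)
      fix u w assume "u \<in> U" "w \<in> W"
      thus "a u w \<in> W" using ae bij_betw_apply[OF b\<alpha>] \<omega>W subspace_add[OF Wsub] by simp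
    qed
    have sU: "\<forall>u\<in>U. \<sigma> u \<in> U" using bij_betw_apply[OF \<sigma>] by blast
    define f where "f x = a (snd (iota W U x)) (fst (iota W U x)) + \<sigma> (snd (iota W U x))" for x
    have fa: "\<forall>w\<in>W. \<forall>u\<in>U. f (w + u) = a u w + \<sigma> u" by (simp add: f_def iota_eq)
    have ce: "conj_iota W U f = F" using conj_formula[OF aW sU fa] Fe by simp
    have bf: "bij f"
    proof (rule bijI)
      show "inj f"
      proof (rule injI)
        fix x y assume fxy: "f x = f y"
        obtain w u where x: "w \<in> W" "u \<in> U" "x = w + u" using sumWU by blast
        obtain w' u' where y: "w' \<in> W" "u' \<in> U" "y = w' + u'" using sumWU by blast
        have "a u w + \<sigma> u = a u' w' + \<sigma> u'" using fxy fa x y by simp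
        hence e: "a u w = a u' w' \<and> \<sigma> u = \<sigma> u'"
          using dec_unique aW sU x y by blast
        hence uu: "u = u'" using bij_betw_imp_inj_on[OF \<sigma>] x(2) y(2) by (simp add: inj_on_eq_iff)
        hence "\<alpha> u w = \<alpha> u w'" using e ae[OF x(2)] x(1) y(1) by simp
        hence "w = w'" using bij_betw_imp_inj_on[OF b\<alpha>[OF x(2)]] x(1) y(1) by (simp add: inj_on_eq_iff)
        thus "x = y" using x y uu by simp
      qed
      show "surj f"
      proof (rule surjI)
        fix y
        obtain w'' u'' where y: "w'' \<in> W" "u'' \<in> U" "y = w'' + u''" using sumWU by blast
        have "u'' \<in> \<sigma> ` U" using bij_betw_imp_surj_on[OF \<sigma>] y(2) by simp
        then obtain u where u: "u \<in> U" "\<sigma> u = u''" by (metis imageE)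
        have "w'' - \<omega> u \<in> W" using subspace_diff[OF Wsub y(1) \<omega>W[OF u(1)]] .
        then obtain w where w: "w \<in> W" "\<alpha> u w = w'' - \<omega> u"
          using bij_betw_imp_surj_on[OF b\<alpha>[OF u(1)]] by (metis imageE)
        have "f (w + u) = y" using fa w u y ae[OF u(1) w(1)] by simp
        thus "f (SOME x. f x = y) = y" by (rule someI)
      qed
    qed
    have cw: "coset_wise_affine scale W f"
      unfolding coset_wise_affine_def
    proof (intro ballI)
      fix C assume "C \<in> {(\<lambda>w. v + w) ` W | v. True}"
      then obtain v0 where C: "C = (\<lambda>w. v0 + w) ` W" by blast
      obtain a0 b0 where ab0: "iota W U v0 = (a0, b0)" "a0 \<in> W" "b0 \<in> U" "v0 = a0 + b0"
        by (rule iota_obtain)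
      define \<phi> where "\<phi> x = \<alpha> b0 (fst (iota W U x))" for x
      have pWW: "fst (iota W U x) \<in> W" for x using iota_props by blast
      have lin: "Vector_Spaces.linear scale scale \<phi>"
        unfolding Vector_Spaces.linear_iff \<phi>_def
        using vs pW_add pW_scale add\<alpha>[OF ab0(3)] sc\<alpha>[OF ab0(3)] pWW by simp
      have pWid: "fst (iota W U w) = w" if "w \<in> W" for w
        using iota_eq[OF that subspace_0[OF Usub]] by simp
      have img: "\<phi> ` W \<subseteq> W"
        using pWid bij_betw_apply[OF b\<alpha>[OF ab0(3)]] by (auto simp: \<phi>_def)
      have "\<forall>x\<in>C. f x = \<phi> x + (\<omega> b0 + \<sigma> b0)"
      proof
        fix x assume "x \<in> C"
        then obtain w where w: "w \<in> W" "x = v0 + w" using C by blast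
        have xe: "x = (a0 + w) + b0" using w(2) ab0(4) by (simp add: algebra_simps)
        have aw: "a0 + w \<in> W" using subspace_add[OF Wsub ab0(2) w(1)] .
        have "f x = a b0 (a0 + w) + \<sigma> b0" using fa aw ab0(3) xe by simp
        also have "\<dots> = \<alpha> b0 (a0 + w) + \<omega> b0 + \<sigma> b0" using ae[OF ab0(3) aw] by simp
        also have "\<phi> x = \<alpha> b0 (a0 + w)" unfolding \<phi>_def xe using iota_eq[OF aw ab0(3)] by simp
        ultimately show "f x = \<phi> x + (\<omega> b0 + \<sigma> b0)" by (simp add: add.assoc)
      qed
      thus "\<exists>\<phi> vC. Vector_Spaces.linear scale scale \<phi> \<and> \<phi> ` W \<subseteq> W \<and> (\<forall>x\<in>C. f x = \<phi> x + vC)"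
        using lin img by blast
    qed
    have "f \<in> CWAff scale W" using cw bf by (simp add: CWAff_def)
    thus ?thesis using ce by blast
  qed
end

theorem theorem4p3:
  fixes scale :: "'k::field \<Rightarrow> 'v::ab_group_add \<Rightarrow> 'v"
    and W U :: "'v set"
  assumes vs: "vector_space scale"
    and fin: "\<exists>B. finite_dimensional_vector_space scale B"
    and W: "module.subspace scale W"
    and U: "module.subspace scale U"
    and cap: "W \<inter> U = {0}"
    and sum: "\<forall>v. \<exists>w\<in>W. \<exists>u\<in>U. v = w + u"
  shows "bij_betw (conj_iota W U) (CWAff scale W) (AffWrSym scale W U) \<and>
    (\<forall>(\<alpha> :: 'v \<Rightarrow> 'v \<Rightarrow> 'v) (v :: 'v \<Rightarrow> 'v) (\<omega> :: 'v \<Rightarrow> 'v) (\<nu> :: 'v \<Rightarrow> 'v) (f :: 'v \<Rightarrow> 'v).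
       (\<forall>u\<in>U. sub_aut scale W (\<alpha> u)) \<and>
       (\<forall>u\<in>U. \<omega> u \<in> W \<and> \<nu> u \<in> U \<and> v u = \<omega> u + \<nu> u) \<and>
       (\<forall>w\<in>W. \<forall>u\<in>U. f (w + u) = \<alpha> u w + u + v u) \<and>
       bij f
     \<longrightarrow> bij_betw (\<lambda>u. u + \<nu> u) U U \<and>
         conj_iota W U f = (\<lambda>p\<in>W \<times> U. (\<alpha> (snd p) (fst p) + \<omega> (snd p), snd p + \<nu> (snd p))))"
proof -
  interpret wu scale W U using vs W U cap sum by (simp add: wu_def wu_axioms_def)
  obtain B where fd: "finite_dimensional_vector_space scale B" using fin by blast
  have "bij_betw (conj_iota W U) (CWAff scale W) (AffWrSym scale W U)"
    unfolding bij_betw_def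
  proof
    show "inj_on (conj_iota W U) (CWAff scale W)" by (rule conj_inj)
    show "conj_iota W U ` CWAff scale W = AffWrSym scale W U"
      using img1[OF fd] img2[OF vs] by blast
  qed
  moreover have "\<forall>(\<alpha> :: 'v \<Rightarrow> 'v \<Rightarrow> 'v) (v :: 'v \<Rightarrow> 'v) (\<omega> :: 'v \<Rightarrow> 'v) (\<nu> :: 'v \<Rightarrow> 'v) (f :: 'v \<Rightarrow> 'v).
       (\<forall>u\<in>U. sub_aut scale W (\<alpha> u)) \<and>
       (\<forall>u\<in>U. \<omega> u \<in> W \<and> \<nu> u \<in> U \<and> v u = \<omega> u + \<nu> u) \<and>
       (\<forall>w\<in>W. \<forall>u\<in>U. f (w + u) = \<alpha> u w + u + v u) \<and>
       bij f
     \<longrightarrow> bij_betw (\<lambda>u. u + \<nu> u) U U \<and>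
         conj_iota W U f = (\<lambda>p\<in>W \<times> U. (\<alpha> (snd p) (fst p) + \<omega> (snd p), snd p + \<nu> (snd p)))"
    using part2 by blast
  ultimately show ?thesis by blast
qed

end
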